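(* Let $f,g$ satisfy the standing assumptions below, fix $\hat\beta>0$, and suppose $\beta\ge\frac{2Q_gM_f}{\mu^3}$. Then for any $(x,y)\in\mathbb{R}^n\times\mathbb{R}^p$, $0\in\mathcal{D}_h(x,y)$ if and only if $0\in\hat{\mathcal{D}}_s(x,y)$.
   Context: Standing assumptions. (A1) Constants $M_f,\mu,L_g,Q_g>0$ exist such that: $f:\mathbb{R}^n\times\mathbb{R}^p\to\mathbb{R}$ is $M_f$-Lipschitz; $g$ is twice differentiable with $\nabla^2_{yy}g\succeq\mu I_p$; $\nabla g$ is $L_g$-Lipschitz; $\nabla^2_{yy}g,\nabla^2_{xy}g$ are $Q_g$-Lipschitz; $\nabla^2_{yy}g$ is continuously differentiable ($\nabla^2_{xy}g\in\mathbb{R}^{n\times p}$ has entries $\partial^2g/\partial x_i\partial y_j$). (A2) $f$ is a potential function of a conservative field $\mathcal{D}_f$ with compact convex values of norm at most $M_f$. Notation (all at $(x,y)$): $H=\nabla^2_{yy}g$; $\mathcal{A}(x,y):=y-H^{-1}\nabla_yg$; $\nabla^3_{xyy}g(x,y)[d]:=\lim_{t\to0}\frac1t(\nabla^2_{xy}g(x,y+td)-\nabla^2_{xy}g(x,y))$, $\nabla^3_{yyy}g(x,y)[d]:=\lim_{t\to0}\frac1t(\nabla^2_{yy}g(x,y+td)-\nabla^2_{yy}g(x,y))$; $J_{A,x}:=-\nabla^2_{xy}gH^{-1}+\nabla^3_{xyy}g[H^{-1}\nabla_yg]H^{-1}$, $J_{A,y}:=\nabla^3_{yyy}g[H^{-1}\nabla_yg]H^{-1}$;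 $\mathcal{D}_h(x,y):=\{(d_x+J_{A,x}d_y+\beta\nabla^2_{xy}g\nabla_yg,\ J_{A,y}d_y+\beta H\nabla_yg):(d_x,d_y)\in\mathcal{D}_f(x,\mathcal{A}(x,y))\}$; $\hat{\mathcal{D}}_s(x,y):=\{(d_x-\nabla^2_{xy}gH^{-1}d_y,\ \hat\beta\nabla_yg):(d_x,d_y)\in\mathcal{D}_f(x,\mathcal{A}(x,y))\}$. *)

theory Defs
  imports "HOL-Analysis.Analysis"
begin

definition abs_cont_curve :: "(real \<Rightarrow> 'a::real_normed_vector) \<Rightarrow> bool" where
  "abs_cont_curve \<gamma> \<longleftrightarrow>
     (\<forall>\<epsilon>>0. \<exists>\<delta>>0. \<forall>(n::nat) (a::nat \<Rightarrow> real) (b::nat \<Rightarrow> real).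
        (\<forall>i<n. 0 \<le> a i \<and> a i \<le> b i \<and> b i \<le> 1) \<and>
        (\<forall>i<n. \<forall>j<n. i \<noteq> j \<longrightarrow> b i \<le> a j \<or> b j \<le> a i) \<and>
        (\<Sum>i<n. b i - a i) < \<delta>
        \<longrightarrow> (\<Sum>i<n. norm (\<gamma> (b i) - \<gamma> (a i))) < \<epsilon>)"

definition field_path_integral :: "('a::euclidean_space \<Rightarrow> 'a set) \<Rightarrow> (real \<Rightarrow> 'a) \<Rightarrow> real" where
  "field_path_integral D \<gamma> =
     integral\<^sup>L (lebesgue_on {0..1})
       (\<lambda>t. Sup ((\<lambda>v. inner (vector_derivative \<gamma> (at t within {0..1})) v) ` D (\<gamma> t)))"

definition conservative_field :: "('a::euclidean_space \<Rightarrow> 'a set) \<Rightarrow> bool" where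
  "conservative_field D \<longleftrightarrow>
     closed {(z, v). v \<in> D z} \<and>
     (\<forall>z. D z \<noteq> {} \<and> compact (D z)) \<and>
     (\<forall>\<gamma>. abs_cont_curve \<gamma> \<and> \<gamma> 0 = \<gamma> 1 \<longrightarrow> field_path_integral D \<gamma> = 0)"

definition potential_of :: "('a::euclidean_space \<Rightarrow> real) \<Rightarrow> ('a \<Rightarrow> 'a set) \<Rightarrow> bool" where
  "potential_of f D \<longleftrightarrow> conservative_field D \<and>
     (\<forall>\<gamma>. abs_cont_curve \<gamma> \<longrightarrow> f (\<gamma> 1) = f (\<gamma> 0) + field_path_integral D \<gamma>)"

definition nabla3_xyy :: "('x \<Rightarrow> 'y::real_vector \<Rightarrow> 'm::real_normed_vector) \<Rightarrow> 'x \<Rightarrow> 'y \<Rightarrow> 'y \<Rightarrow> 'm" where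
  "nabla3_xyy Hxy x y d = Lim (at 0) (\<lambda>t::real. (1 / t) *\<^sub>R (Hxy x (y + t *\<^sub>R d) - Hxy x y))"

definition nabla3_yyy :: "('x \<Rightarrow> 'y::real_vector \<Rightarrow> 'm::real_normed_vector) \<Rightarrow> 'x \<Rightarrow> 'y \<Rightarrow> 'y \<Rightarrow> 'm" where
  "nabla3_yyy Hyy x y d = Lim (at 0) (\<lambda>t::real. (1 / t) *\<^sub>R (Hyy x (y + t *\<^sub>R d) - Hyy x y))"

definition A_map :: "(real^'n \<Rightarrow> real^'p \<Rightarrow> real^'p) \<Rightarrow> (real^'n \<Rightarrow> real^'p \<Rightarrow> real^'p^'p)
    \<Rightarrow> real^'n \<Rightarrow> real^'p \<Rightarrow> real^'p" where
  "A_map gy Hyy x y = y - matrix_inv (Hyy x y) *v gy x y"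

definition J_Ax :: "(real^'n \<Rightarrow> real^'p \<Rightarrow> real^'p) \<Rightarrow> (real^'n \<Rightarrow> real^'p \<Rightarrow> real^'p^'p)
    \<Rightarrow> (real^'n \<Rightarrow> real^'p \<Rightarrow> real^'p^'n) \<Rightarrow> real^'n \<Rightarrow> real^'p \<Rightarrow> real^'p^'n" where
  "J_Ax gy Hyy Hxy x y =
     - (Hxy x y ** matrix_inv (Hyy x y))
     + nabla3_xyy Hxy x y (matrix_inv (Hyy x y) *v gy x y) ** matrix_inv (Hyy x y)"

definition J_Ay :: "(real^'n \<Rightarrow> real^'p \<Rightarrow> real^'p) \<Rightarrow> (real^'n \<Rightarrow> real^'p \<Rightarrow> real^'p^'p)
    \<Rightarrow> real^'n \<Rightarrow> real^'p \<Rightarrow> real^'p^'p" where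
  "J_Ay gy Hyy x y =
     nabla3_yyy Hyy x y (matrix_inv (Hyy x y) *v gy x y) ** matrix_inv (Hyy x y)"

definition D_h :: "((real^'n) \<times> (real^'p) \<Rightarrow> ((real^'n) \<times> (real^'p)) set)
    \<Rightarrow> (real^'n \<Rightarrow> real^'p \<Rightarrow> real^'p) \<Rightarrow> (real^'n \<Rightarrow> real^'p \<Rightarrow> real^'p^'p)
    \<Rightarrow> (real^'n \<Rightarrow> real^'p \<Rightarrow> real^'p^'n) \<Rightarrow> real \<Rightarrow> real^'n \<Rightarrow> real^'p
    \<Rightarrow> ((real^'n) \<times> (real^'p)) set" where
  "D_h Df gy Hyy Hxy \<beta> x y =
     {(dx + J_Ax gy Hyy Hxy x y *v dy + \<beta> *\<^sub>R (Hxy x y *v gy x y),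
       J_Ay gy Hyy x y *v dy + \<beta> *\<^sub>R (Hyy x y *v gy x y)) | dx dy.
        (dx, dy) \<in> Df (x, A_map gy Hyy x y)}"

definition D_s_hat :: "((real^'n) \<times> (real^'p) \<Rightarrow> ((real^'n) \<times> (real^'p)) set)
    \<Rightarrow> (real^'n \<Rightarrow> real^'p \<Rightarrow> real^'p) \<Rightarrow> (real^'n \<Rightarrow> real^'p \<Rightarrow> real^'p^'p)
    \<Rightarrow> (real^'n \<Rightarrow> real^'p \<Rightarrow> real^'p^'n) \<Rightarrow> real \<Rightarrow> real^'n \<Rightarrow> real^'p
    \<Rightarrow> ((real^'n) \<times> (real^'p)) set" where
  "D_s_hat Df gy Hyy Hxy \<beta>h x y =
     {(dx - (Hxy x y ** matrix_inv (Hyy x y)) *v dy, \<beta>h *\<^sub>R gy x y) | dx dy.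
        (dx, dy) \<in> Df (x, A_map gy Hyy x y)}"

end

theory Submission
  imports Defs
begin

lemma sc_inj:
  fixes H :: "real^'p^'p"
  assumes mu: "\<mu> > 0" and sc: "\<And>v. \<mu> * inner v v \<le> inner v (H *v v)"
  shows "\<mu> * norm v \<le> norm (H *v v)"
proof -
  have "\<mu> * (norm v)^2 \<le> inner v (H *v v)" using sc[of v] by (simp add: power2_norm_eq_inner)
  also have "\<dots> \<le> norm v * norm (H *v v)" by (rule norm_cauchy_schwarz)
  finally have "norm v * (\<mu> * norm v) \<le> norm v * norm (H *v v)" by (simp add: power2_eq_square mult_ac)
  then show ?thesis
    by (cases "norm v = 0") (auto simp: mu)
qed

lemma sc_inv:
  fixes H :: "real^'p^'p"
  assumes mu: "\<mu> > 0" and sc: "\<And>v. \<mu> * inner v v \<le> inner v (H *v v)"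
  shows "H ** matrix_inv H = mat 1" "matrix_inv H ** H = mat 1"
proof -
  have "\<forall>x. H *v x = 0 \<longrightarrow> x = 0"
    using sc_inj[OF mu sc] mu by (metis mult_le_0_iff norm_eq_zero norm_ge_zero norm_zero not_le order_antisym)
  then have "invertible H" by (simp add: invertible_left_inverse matrix_left_invertible_ker)
  then have "\<exists>A'. H ** A' = mat 1 \<and> A' ** H = mat 1" by (simp add: invertible_def)
  then have "H ** matrix_inv H = mat 1 \<and> matrix_inv H ** H = mat 1"
    unfolding matrix_inv_def by (rule someI_ex)
  then show "H ** matrix_inv H = mat 1" "matrix_inv H ** H = mat 1" by auto
qed

lemma sc_inv_bound:
  fixes H :: "real^'p^'p"
  assumes mu: "\<mu> > 0" and sc: "\<And>v. \<mu> * inner v v \<le> inner v (H *v v)"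
  shows "norm (matrix_inv H *v u) \<le> norm u / \<mu>"
proof -
  have "H *v (matrix_inv H *v u) = u"
    by (simp add: matrix_vector_mul_assoc sc_inv[OF mu sc])
  then show ?thesis using sc_inj[OF mu sc, of "matrix_inv H *v u"] mu
    by (simp add: field_simps)
qed

lemma nabla3_bound:
  fixes Hyy :: "real^'n \<Rightarrow> real^'p \<Rightarrow> real^'p^'p"
  assumes C1: "\<exists>D. (\<forall>z. ((\<lambda>(u, v). Hyy u v) has_derivative blinfun_apply (D z)) (at z))
                     \<and> continuous_on UNIV D"
    and lip: "\<And>x y x' y'. onorm (\<lambda>v. (Hyy x y - Hyy x' y') *v v) \<le> Q * dist (x, y) (x', y')"
  shows "norm (nabla3_yyy Hyy x y w *v v) \<le> Q * norm w * norm v"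
proof -
  obtain D where D: "\<And>z. ((\<lambda>(u, v). Hyy u v) has_derivative blinfun_apply (D z)) (at z)"
    using C1 by blast
  define L where "L = blinfun_apply (D (x, y)) (0, w)"
  define \<phi> where "\<phi> = (\<lambda>t::real. Hyy x (y + t *\<^sub>R w))"
  have c: "((\<lambda>t::real. (x, y + t *\<^sub>R w)) has_derivative (\<lambda>t. (0, t *\<^sub>R w))) (at 0)"
    by (auto intro!: derivative_eq_intros)
  have "((\<lambda>(u, v). Hyy u v) \<circ> (\<lambda>t::real. (x, y + t *\<^sub>R w)) has_derivative
         (blinfun_apply (D (x, y)) \<circ> (\<lambda>t. (0, t *\<^sub>R w)))) (at 0)"
  proof (rule diff_chain_at[OF c])
    show "((\<lambda>(u, v). Hyy u v) has_derivative blinfun_apply (D (x, y))) (at (x, y + 0 *\<^sub>R w))"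
      using D[of "(x, y)"] by simp
  qed
  moreover have "blinfun_apply (D (x, y)) \<circ> (\<lambda>t. (0, t *\<^sub>R w)) = (\<lambda>t. t *\<^sub>R L)"
  proof
    fix t :: real
    have "(0::real^'n, t *\<^sub>R w) = t *\<^sub>R (0, w)" by simp
    then show "(blinfun_apply (D (x, y)) \<circ> (\<lambda>t. (0, t *\<^sub>R w))) t = t *\<^sub>R L"
      by (simp add: L_def flip: blinfun.scaleR_right)
  qed
  ultimately have der: "(\<phi> has_derivative (\<lambda>t. t *\<^sub>R L)) (at 0)"
    by (simp add: \<phi>_def o_def)
  then have "((\<lambda>s. (\<phi> s - \<phi> 0 - s *\<^sub>R L) /\<^sub>R norm s) \<longlongrightarrow> 0) (at 0)"
    by (simp add: has_derivative_at_within)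
  then have "((\<lambda>s. norm ((\<phi> s - \<phi> 0 - s *\<^sub>R L) /\<^sub>R norm s)) \<longlongrightarrow> 0) (at 0)"
    by (rule tendsto_norm_zero)
  moreover have "\<forall>\<^sub>F s in at (0::real). norm ((\<phi> s - \<phi> 0 - s *\<^sub>R L) /\<^sub>R norm s)
       = norm ((1 / s) *\<^sub>R (\<phi> s - \<phi> 0) - L)"
    unfolding eventually_at_filter
  proof (rule always_eventually, intro allI impI)
    fix s :: real assume "s \<noteq> 0" "s \<in> UNIV"
    have "(1 / s) *\<^sub>R (\<phi> s - \<phi> 0) - L = (1 / s) *\<^sub>R (\<phi> s - \<phi> 0 - s *\<^sub>R L)"
      using \<open>s \<noteq> 0\<close> by (simp add: algebra_simps)
    then show "norm ((\<phi> s - \<phi> 0 - s *\<^sub>R L) /\<^sub>R norm s) = norm ((1 / s) *\<^sub>R (\<phi> s - \<phi> 0) - L)"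
      by (simp add: divide_inverse mult.commute)
  qed
  ultimately have "((\<lambda>s. norm ((1 / s) *\<^sub>R (\<phi> s - \<phi> 0) - L)) \<longlongrightarrow> 0) (at 0)"
    by (rule Lim_transform_eventually)
  then have "((\<lambda>s. (1 / s) *\<^sub>R (\<phi> s - \<phi> 0) - L) \<longlongrightarrow> 0) (at 0)"
    by (rule tendsto_norm_zero_cancel)
  then have lim: "((\<lambda>s. (1 / s) *\<^sub>R (\<phi> s - \<phi> 0)) \<longlongrightarrow> L) (at 0)"
    by (simp add: Lim_null[symmetric])
  have "nabla3_yyy Hyy x y w = L"
    unfolding nabla3_yyy_def using lim unfolding \<phi>_def by (intro tendsto_Lim) simp_all
  moreover have lin: "bounded_linear (\<lambda>A::real^'p^'p. A *v v)"
    by (rule linear_conv_bounded_linear[THEN iffD1]) (auto intro!: linearI simp: algebra_simps scaleR_matrix_vector_assoc)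
  have "((\<lambda>s. ((1 / s) *\<^sub>R (\<phi> s - \<phi> 0)) *v v) \<longlongrightarrow> L *v v) (at 0)"
    using bounded_linear.tendsto[OF lin lim] .
  moreover have "\<forall>\<^sub>F s in at (0::real). norm (((1 / s) *\<^sub>R (\<phi> s - \<phi> 0)) *v v) \<le> Q * norm w * norm v"
    unfolding eventually_at_filter
  proof (rule always_eventually, intro allI impI)
    fix s :: real assume s: "s \<noteq> 0" and "s \<in> UNIV"
    have "norm ((\<phi> s - \<phi> 0) *v v) \<le> onorm (\<lambda>v. (\<phi> s - \<phi> 0) *v v) * norm v"
      by (rule onorm) simp
    also have "\<dots> \<le> (Q * dist (x, y + s *\<^sub>R w) (x, y)) * norm v"
      by (rule mult_right_mono) (use lip[of x "y + s *\<^sub>R w" x y] in \<open>simp_all add: \<phi>_def\<close>)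
    also have "dist (x, y + s *\<^sub>R w) (x, y) = \<bar>s\<bar> * norm w"
      by (simp add: dist_Pair_Pair dist_norm)
    finally have "norm ((\<phi> s - \<phi> 0) *v v) \<le> Q * (\<bar>s\<bar> * norm w) * norm v" .
    then have "norm ((\<phi> s - \<phi> 0) *v v) / \<bar>s\<bar> \<le> Q * norm w * norm v"
      using s by (simp add: divide_le_eq mult_ac)
    moreover have "((1 / s) *\<^sub>R (\<phi> s - \<phi> 0)) *v v = (1 / s) *\<^sub>R ((\<phi> s - \<phi> 0) *v v)"
      by (simp add: scaleR_matrix_vector_assoc)
    ultimately show "norm (((1 / s) *\<^sub>R (\<phi> s - \<phi> 0)) *v v) \<le> Q * norm w * norm v"
      by (simp add: divide_inverse mult_ac)
  qed
  ultimately show ?thesis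
    by (intro Lim_norm_ubound[OF trivial_limit_at]) auto
qed

theorem proposition4p5:
  fixes f g :: "real^'n \<Rightarrow> real^'p \<Rightarrow> real"
    and gx :: "real^'n \<Rightarrow> real^'p \<Rightarrow> real^'n"
    and gy :: "real^'n \<Rightarrow> real^'p \<Rightarrow> real^'p"
    and Hyy :: "real^'n \<Rightarrow> real^'p \<Rightarrow> real^'p^'p"
    and Hxy :: "real^'n \<Rightarrow> real^'p \<Rightarrow> real^'p^'n"
    and Df :: "(real^'n) \<times> (real^'p) \<Rightarrow> ((real^'n) \<times> (real^'p)) set"
    and M\<^sub>f \<mu> L\<^sub>g Q\<^sub>g \<beta> \<beta>h :: real
    and x :: "real^'n" and y :: "real^'p"
  assumes consts_pos: "M\<^sub>f > 0" "\<mu> > 0" "L\<^sub>g > 0" "Q\<^sub>g > 0"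
    \<comment> \<open>(A1) f is M_f-Lipschitz\<close>
    and f_lip: "M\<^sub>f-lipschitz_on UNIV (\<lambda>(x, y). f x y)"
    \<comment> \<open>(A1) g is twice differentiable: gradient (gx, gy), Hessian blocks Hyy, Hxy\<close>
    and g_grad: "\<And>x y. ((\<lambda>(u, v). g u v) has_derivative
                   (\<lambda>(du, dv). inner (gx x y) du + inner (gy x y) dv)) (at (x, y))"
    and gx_diff: "\<And>x y. (\<lambda>(u, v). gx u v) differentiable (at (x, y))"
    and gy_hess: "\<And>x y. ((\<lambda>(u, v). gy u v) has_derivative
                   (\<lambda>(du, dv). transpose (Hxy x y) *v du + Hyy x y *v dv)) (at (x, y))"
    \<comment> \<open>(A1) strong convexity in y\<close>
    and strong_cvx: "\<And>x y v. \<mu> * inner v v \<le> inner v (Hyy x y *v v)"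
    \<comment> \<open>(A1) gradient of g is L_g-Lipschitz\<close>
    and grad_lip: "L\<^sub>g-lipschitz_on UNIV (\<lambda>(x, y). (gx x y, gy x y))"
    \<comment> \<open>(A1) Hessian blocks are Q_g-Lipschitz (operator norm)\<close>
    and Hyy_lip: "\<And>x y x' y'. onorm (\<lambda>v. (Hyy x y - Hyy x' y') *v v) \<le> Q\<^sub>g * dist (x, y) (x', y')"
    and Hxy_lip: "\<And>x y x' y'. onorm (\<lambda>v. (Hxy x y - Hxy x' y') *v v) \<le> Q\<^sub>g * dist (x, y) (x', y')"
    \<comment> \<open>(A1) Hyy is continuously differentiable\<close>
    and Hyy_C1: "\<exists>D. (\<forall>z. ((\<lambda>(u, v). Hyy u v) has_derivative blinfun_apply (D z)) (at z))
                     \<and> continuous_on UNIV D"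
    \<comment> \<open>(A2) f is a potential of a conservative field with compact convex values bounded by M_f\<close>
    and f_pot: "potential_of (\<lambda>(x, y). f x y) Df"
    and Df_vals: "\<And>z. compact (Df z) \<and> convex (Df z) \<and> (\<forall>d\<in>Df z. norm d \<le> M\<^sub>f)"
    and beta_hat_pos: "\<beta>h > 0"
    and beta_bound: "\<beta> \<ge> 2 * Q\<^sub>g * M\<^sub>f / \<mu> ^ 3"
  shows "(0 \<in> D_h Df gy Hyy Hxy \<beta> x y) \<longleftrightarrow> (0 \<in> D_s_hat Df gy Hyy Hxy \<beta>h x y)"
proof -
  define H where "H = Hyy x y"
  define Hi where "Hi = matrix_inv H"
  define g0 where "g0 = gy x y"
  define w where "w = Hi *v g0"
  have scH: "\<And>v. \<mu> * inner v v \<le> inner v (H *v v)" using strong_cvx by (simp add: H_def)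
  have mu: "\<mu> > 0" using consts_pos by simp
  have z1: "nabla3_xyy Hxy x y 0 = 0"
    unfolding nabla3_xyy_def by (intro tendsto_Lim) simp_all
  have z2: "nabla3_yyy Hyy x y 0 = 0"
    unfolding nabla3_yyy_def by (intro tendsto_Lim) simp_all
  have key: "0 \<in> D_h Df gy Hyy Hxy \<beta> x y \<longleftrightarrow> 0 \<in> D_s_hat Df gy Hyy Hxy \<beta>h x y"
    if g0z: "g0 = 0"
  proof -
    have JAx: "J_Ax gy Hyy Hxy x y = - (Hxy x y ** matrix_inv (Hyy x y))"
      unfolding J_Ax_def using g0z by (simp add: g0_def z1)
    have JAy: "J_Ay gy Hyy x y = 0"
      unfolding J_Ay_def using g0z by (simp add: g0_def z2)
    have neg: "\<And>M v. (- M) *v v = - ((M::real^'p^'n) *v v)"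
      by (metis add.inverse_inverse diff_0 matrix_vector_mult_0 matrix_vector_mult_diff_rdistrib)
    have gy0: "gy x y = 0" using g0z g0_def by simp
    show ?thesis
      unfolding D_h_def D_s_hat_def JAx JAy using gy0 beta_hat_pos
      by (auto simp: neg zero_prod_def)
  qed
  show ?thesis
  proof
    assume "0 \<in> D_h Df gy Hyy Hxy \<beta> x y"
    then obtain dx dy where dd: "(dx, dy) \<in> Df (x, A_map gy Hyy x y)"
      and e2: "J_Ay gy Hyy x y *v dy + \<beta> *\<^sub>R (Hyy x y *v gy x y) = 0"
      unfolding D_h_def by (auto simp: zero_prod_def)
    have ndy: "norm dy \<le> M\<^sub>f"
      using Df_vals[of "(x, A_map gy Hyy x y)"] dd norm_snd_le[of dy dx] by force
    define N where "N = nabla3_yyy Hyy x y w"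
    have "J_Ay gy Hyy x y *v dy = N *v (Hi *v dy)"
      unfolding J_Ay_def N_def w_def Hi_def H_def g0_def by (simp add: matrix_vector_mul_assoc)
    then have e2': "N *v (Hi *v dy) = - (\<beta> *\<^sub>R (H *v g0))"
      using e2 by (simp add: H_def g0_def eq_neg_iff_add_eq_0)
    have "norm (N *v (Hi *v dy)) \<le> Q\<^sub>g * norm w * norm (Hi *v dy)"
      unfolding N_def by (rule nabla3_bound[OF Hyy_C1 Hyy_lip])
    also have "\<dots> \<le> Q\<^sub>g * (norm g0 / \<mu>) * (M\<^sub>f / \<mu>)"
    proof -
      have a: "norm w \<le> norm g0 / \<mu>" unfolding w_def Hi_def by (rule sc_inv_bound[OF mu scH])
      have "norm (Hi *v dy) \<le> norm dy / \<mu>" unfolding Hi_def by (rule sc_inv_bound[OF mu scH])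
      also have "\<dots> \<le> M\<^sub>f / \<mu>" using ndy mu by (simp add: divide_right_mono)
      finally have b: "norm (Hi *v dy) \<le> M\<^sub>f / \<mu>" .
      show ?thesis using a b consts_pos
        by (intro mult_mono mult_left_mono) auto
    qed
    finally have up: "norm (\<beta> *\<^sub>R (H *v g0)) \<le> Q\<^sub>g * M\<^sub>f / \<mu>^2 * norm g0"
      using e2' by (simp add: power2_eq_square field_simps)
    have bpos: "\<beta> \<ge> 0"
      using beta_bound consts_pos by (meson order_trans divide_nonneg_pos less_imp_le mult_nonneg_nonneg zero_less_power zero_le_numeral)
    have "\<beta> * (\<mu> * norm g0) \<le> norm (\<beta> *\<^sub>R (H *v g0))"
      using sc_inj[OF mu scH, of g0] bpos by (simp add: mult_left_mono)
    with up have i1: "\<beta> * \<mu> * norm g0 \<le> Q\<^sub>g * M\<^sub>f / \<mu>^2 * norm g0" by simp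
    have "2 * Q\<^sub>g * M\<^sub>f / \<mu>^2 = (2 * Q\<^sub>g * M\<^sub>f / \<mu> ^ 3) * \<mu>"
      using mu by (simp add: field_simps power3_eq_cube power2_eq_square)
    also have "\<dots> \<le> \<beta> * \<mu>" using mult_right_mono[OF beta_bound, of \<mu>] mu by simp
    finally have "2 * Q\<^sub>g * M\<^sub>f / \<mu>^2 * norm g0 \<le> \<beta> * \<mu> * norm g0"
      by (rule mult_right_mono) simp
    then have i2: "2 * ((Q\<^sub>g * M\<^sub>f / \<mu>^2) * norm g0) \<le> \<beta> * \<mu> * norm g0"
      by (simp only: mult.assoc)
    have twok: "\<And>k::real. 2 * k \<le> k \<Longrightarrow> k \<le> 0" by linarith
    from twok[OF order_trans[OF i2 i1]] have "(Q\<^sub>g * M\<^sub>f / \<mu>^2) * norm g0 \<le> 0" .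
    moreover have "Q\<^sub>g * M\<^sub>f / \<mu>^2 > 0" using consts_pos by simp
    ultimately have "norm g0 \<le> 0" using mult_le_0_iff[of "Q\<^sub>g * M\<^sub>f / \<mu>^2" "norm g0"] by (simp only:) linarith
    then have "g0 = 0" by simp
    with key \<open>0 \<in> D_h Df gy Hyy Hxy \<beta> x y\<close> show "0 \<in> D_s_hat Df gy Hyy Hxy \<beta>h x y" by blast
  next
    assume a: "0 \<in> D_s_hat Df gy Hyy Hxy \<beta>h x y"
    then have "\<beta>h *\<^sub>R gy x y = 0" unfolding D_s_hat_def by (auto simp: zero_prod_def)
    then have "g0 = 0" using beta_hat_pos by (simp add: g0_def)
    with key a show "0 \<in> D_h Df gy Hyy Hxy \<beta> x y" by blast
  qed
qed

end
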